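(* Let Assumption (A) be satisfied. For $\alpha\in[0,1]$ define $f^*_\alpha(\boldsymbol{x},s) = \sqrt{\alpha}\, f^*(\boldsymbol{x},s) + (1-\sqrt{\alpha})\sum_{s'=1}^K w_{s'}\, F^{-1}_{\nu^*_{s'}}\circ F_{\nu^*_s}\circ f^*(\boldsymbol{x},s)$ for $(\boldsymbol{x},s)\in\mathbb{R}^p\times[K]$. Then for every $\alpha\in[0,1]$, $$\mathcal{R}(f^*_\alpha) = (1-\sqrt{\alpha})^2\,\mathcal{R}(f^*_0) = (1-\sqrt{\alpha})^2\,\mathcal{U}(f^* ).$$
   Context: Let $p,K\ge 1$ be integers and $[K]=\{1,\dots,K\}$. Let $(\boldsymbol{X},S)$ be a random pair with values in $\mathbb{R}^p\times[K]$, with $\mathbb{P}(S=s)>0$ for all $s$, and let $f^*:\mathbb{R}^p\times[K]\to\mathbb{R}$ be measurable. Fix $\boldsymbol{w}\in\Delta^{K-1}$ (probability simplex). For measurable $f:\mathbb{R}^p\times[K]\to\mathbb{R}$: $\mathcal{R}(f)=\sum_{s=1}^K w_s\,\mathbb{E}[(f(\boldsymbol{X},S)-f^*(\boldsymbol{X},S))^2\mid S=s]$ and $\mathcal{U}(f)=\min_{\nu\in\mathcal{P}_2(\mathbb{R})}\sum_{s=1}^K w_s\,\mathsf{W}_2^2(\mathrm{Law}(f(\boldsymbol{X},S)\mid S=s),\nu)$, with $\mathcal{P}_2(\mathbb{R})$ the Borel probability measures on $\mathbb{R}$ with finite second moment and $\mathsf{W}_2$ the Wasserstein-2 distance. $\nu^*_s=\mathrm{Law}(f^*(\boldsymbol{X},S)\mid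 S=s)$; $F_\mu$ denotes a CDF and $F_\mu^{-1}(t)=\inf\{x:F_\mu(x)\ge t\}$. Assumption (A): $\nu^*_1,\dots,\nu^*_K$ are non-atomic with finite second moments. (By a companion result, $f^*_\alpha$ minimizes $\mathcal{R}(f)$ subject to $\mathcal{U}(f)\le\alpha\,\mathcal{U}(f^* )$.) *)

theory Defs
  imports "HOL-Probability.Probability"
begin

definition cond_meas :: "'a measure \<Rightarrow> ('a \<Rightarrow> nat) \<Rightarrow> nat \<Rightarrow> 'a measure" where
  "cond_meas M S s = uniform_measure M {\<omega> \<in> space M. S \<omega> = s}"

definition cond_law :: "'a measure \<Rightarrow> ('a \<Rightarrow> 'x) \<Rightarrow> ('a \<Rightarrow> nat) \<Rightarrow> ('x \<Rightarrow> nat \<Rightarrow> real) \<Rightarrow> nat \<Rightarrow> real measure" where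
  "cond_law M X S f s = distr (cond_meas M S s) borel (\<lambda>\<omega>. f (X \<omega>) (S \<omega>))"

definition quantile :: "real measure \<Rightarrow> real \<Rightarrow> real" where
  "quantile \<mu> t = Inf {x. cdf \<mu> x \<ge> t}"

definition P2 :: "real measure set" where
  "P2 = {\<nu>. sets \<nu> = sets borel \<and> prob_space \<nu> \<and> integrable \<nu> (\<lambda>x. x ^ 2)}"

definition couplings :: "real measure \<Rightarrow> real measure \<Rightarrow> (real \<times> real) measure set" where
  "couplings \<mu> \<nu> = {\<pi>. sets \<pi> = sets (borel :: (real \<times> real) measure) \<and> prob_space \<pi> \<and>
      distr \<pi> borel fst = \<mu> \<and> distr \<pi> borel snd = \<nu>}"

definition W2sq :: "real measure \<Rightarrow> real measure \<Rightarrow> real" where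
  "W2sq \<mu> \<nu> = enn2real (INF \<pi>\<in>couplings \<mu> \<nu>. \<integral>\<^sup>+ z. ennreal ((fst z - snd z) ^ 2) \<partial>\<pi>)"

definition risk :: "'a measure \<Rightarrow> ('a \<Rightarrow> 'x) \<Rightarrow> ('a \<Rightarrow> nat) \<Rightarrow> nat \<Rightarrow> (nat \<Rightarrow> real)
    \<Rightarrow> ('x \<Rightarrow> nat \<Rightarrow> real) \<Rightarrow> ('x \<Rightarrow> nat \<Rightarrow> real) \<Rightarrow> real" where
  "risk M X S K w fstar f = (\<Sum>s\<in>{1..K}. w s *
      integral\<^sup>L (cond_meas M S s) (\<lambda>\<omega>. (f (X \<omega>) (S \<omega>) - fstar (X \<omega>) (S \<omega>)) ^ 2))"

text \<open>Unfairness U(f) (the minimum over P_2 is written as an infimum).\<close>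
definition unfairness :: "'a measure \<Rightarrow> ('a \<Rightarrow> 'x) \<Rightarrow> ('a \<Rightarrow> nat) \<Rightarrow> nat \<Rightarrow> (nat \<Rightarrow> real)
    \<Rightarrow> ('x \<Rightarrow> nat \<Rightarrow> real) \<Rightarrow> real" where
  "unfairness M X S K w f = (INF \<nu>\<in>P2. \<Sum>s\<in>{1..K}. w s * W2sq (cond_law M X S f s) \<nu>)"

definition fstar_alpha :: "'a measure \<Rightarrow> ('a \<Rightarrow> 'x) \<Rightarrow> ('a \<Rightarrow> nat) \<Rightarrow> nat \<Rightarrow> (nat \<Rightarrow> real)
    \<Rightarrow> ('x \<Rightarrow> nat \<Rightarrow> real) \<Rightarrow> real \<Rightarrow> 'x \<Rightarrow> nat \<Rightarrow> real" where
  "fstar_alpha M X S K w fstar \<alpha> x s = sqrt \<alpha> * fstar x s + (1 - sqrt \<alpha>) *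
     (\<Sum>s'\<in>{1..K}. w s' * quantile (cond_law M X S fstar s') (cdf (cond_law M X S fstar s) (fstar x s)))"

end

theory Submission
  imports Defs
begin


definition phi :: "real \<Rightarrow> real \<Rightarrow> real" where
  "phi a x = (if a < x then 1 else 0) - (if a < 0 then 1 else 0)"

lemma phi_measurable[measurable]: "(\<lambda>p. phi (f p) (g p)) \<in> borel_measurable M"
  if [measurable]: "f \<in> borel_measurable M" "g \<in> borel_measurable M"
  unfolding phi_def by measurable

lemma phi_cases: "(\<lambda>a. phi a x) = (if 0 \<le> x then indicator {0..<x} else (\<lambda>a. - indicator {x..<0} a))"
  by (auto simp: phi_def indicator_def fun_eq_iff)

lemma phi_abs_cases: "(\<lambda>a. \<bar>phi a x\<bar>) = (if 0 \<le> x then indicator {0..<x} else indicator {x..<0})"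
  by (auto simp: phi_def indicator_def fun_eq_iff)

lemma phi_integrable: "integrable lborel (\<lambda>a. phi a x)"
  by (subst phi_cases) (auto intro!: integrable_real_indicator simp: emeasure_lborel_Ico)

lemma phi_integral: "integral\<^sup>L lborel (\<lambda>a. phi a x) = x"
  by (subst phi_cases) (auto simp: measure_lborel_Ico)

lemma phi_abs_integral: "integral\<^sup>L lborel (\<lambda>a. \<bar>phi a x\<bar>) = \<bar>x\<bar>"
  by (subst phi_abs_cases) (auto simp: measure_lborel_Ico)

lemma prod_integrable:
  fixes f g :: "real \<Rightarrow> real"
  assumes f: "integrable lborel f" and g: "integrable lborel g"
  shows "integrable (lborel \<Otimes>\<^sub>M lborel) (\<lambda>p. f (fst p) * g (snd p))"
    and "integral\<^sup>L (lborel \<Otimes>\<^sub>M lborel) (\<lambda>p. f (fst p) * g (snd p)) = integral\<^sup>L lborel f * integral\<^sup>L lborel g"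
proof -

  have [measurable]: "f \<in> borel_measurable borel" "g \<in> borel_measurable borel"
    using f g by (auto dest: borel_measurable_integrable)
  show I: "integrable (lborel \<Otimes>\<^sub>M lborel) (\<lambda>p. f (fst p) * g (snd p))"
  proof (rule lborel_pair.Fubini_integrable)
    show "integrable lborel (\<lambda>x. \<integral>y. norm (f (fst (x, y)) * g (snd (x, y))) \<partial>lborel)"
      using f g by (simp add: abs_mult)
  qed (use f g in auto)
  have "integral\<^sup>L (lborel \<Otimes>\<^sub>M lborel) (\<lambda>p. f (fst p) * g (snd p)) = (\<integral>x. (\<integral>y. f x * g y \<partial>lborel) \<partial>lborel)"
    using lborel_pair.integral_fst'[OF I] by simp
  also have "\<dots> = integral\<^sup>L lborel f * integral\<^sup>L lborel g"
    by simp
  finally show "integral\<^sup>L (lborel \<Otimes>\<^sub>M lborel) (\<lambda>p. f (fst p) * g (snd p)) = integral\<^sup>L lborel f * integral\<^sup>L lborel g" .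
qed



lemma sq_prod_integrable:
  fixes f g :: "'a \<Rightarrow> real"
  assumes "integrable M (\<lambda>x. (f x)^2)" "integrable M (\<lambda>x. (g x)^2)"
    "f \<in> borel_measurable M" "g \<in> borel_measurable M"
  shows "integrable M (\<lambda>x. f x * g x)"
proof (rule Bochner_Integration.integrable_bound[OF Bochner_Integration.integrable_add[OF assms(1,2)]])
  show "(\<lambda>x. f x * g x) \<in> borel_measurable M" using assms(3,4) by measurable
  show "AE x in M. norm (f x * g x) \<le> norm ((f x)^2 + (g x)^2)"
  proof (rule AE_I2)
    fix x
    have h: "2*(\<bar>f x\<bar>*\<bar>g x\<bar>) \<le> (f x)^2 + (g x)^2" 
      using sum_squares_bound[of "\<bar>f x\<bar>" "\<bar>g x\<bar>"] by (simp add: mult.assoc)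
    have "0 \<le> \<bar>f x\<bar>*\<bar>g x\<bar>" by simp
    then have "\<bar>f x * g x\<bar> \<le> (f x)^2 + (g x)^2" using h unfolding abs_mult by linarith
    then show "norm (f x * g x) \<le> norm ((f x)^2 + (g x)^2)" by simp
  qed
qed

lemma sets_borel_pair: "sets (borel \<Otimes>\<^sub>M borel :: (real \<times> real) measure) = sets borel"
  by (subst borel_prod) (rule refl)

lemma hoeff:
  fixes P :: "(real \<times> real) measure"
  assumes P: "prob_space P" and sP: "sets P = sets borel"
    and i1: "integrable P (\<lambda>z. (fst z)^2)" and i2: "integrable P (\<lambda>z. (snd z)^2)"
  shows "integrable (lborel \<Otimes>\<^sub>M lborel) (\<lambda>ab. \<integral>z. phi (fst ab) (fst z) * phi (snd ab) (snd z) \<partial>P)"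
    and "(\<integral>z. fst z * snd z \<partial>P) = (\<integral>ab. (\<integral>z. phi (fst ab) (fst z) * phi (snd ab) (snd z) \<partial>P) \<partial>(lborel \<Otimes>\<^sub>M lborel))"
proof -
  interpret prob_space P by fact
  interpret N: sigma_finite_measure "lborel \<Otimes>\<^sub>M lborel :: (real \<times> real) measure"
    by (intro sigma_finite_pair_measure) (auto intro: lborel.sigma_finite_measure_axioms)
  interpret Q: pair_sigma_finite P "lborel \<Otimes>\<^sub>M lborel :: (real \<times> real) measure" ..
  have [measurable_cong]: "sets P = sets (borel \<Otimes>\<^sub>M borel)" using sP by (simp only: sets_borel_pair)
  define G where "G = (\<lambda>z (ab::real\<times>real). phi (fst ab) (fst z) * phi (snd ab) (snd z))"
  have Gm[measurable]: "(\<lambda>p. G (fst p) (snd p)) \<in> borel_measurable (P \<Otimes>\<^sub>M (lborel \<Otimes>\<^sub>M lborel))"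
    unfolding G_def by measurable
  have fm[measurable]: "fst \<in> borel_measurable P" "snd \<in> borel_measurable P" by measurable
  have inner: "integrable (lborel \<Otimes>\<^sub>M lborel) (G z)" 
    "integral\<^sup>L (lborel \<Otimes>\<^sub>M lborel) (G z) = fst z * snd z" for z
    using prod_integrable[OF phi_integrable phi_integrable, of "fst z" "snd z"]
    by (simp_all add: G_def phi_integral)
  have inner_abs: "(\<integral>ab. \<bar>G z ab\<bar> \<partial>(lborel \<Otimes>\<^sub>M lborel)) = \<bar>fst z\<bar> * \<bar>snd z\<bar>" for z
  proof -
    have "(\<integral>ab. \<bar>G z ab\<bar> \<partial>(lborel \<Otimes>\<^sub>M lborel)) = (\<integral>ab. \<bar>phi (fst ab) (fst z)\<bar> * \<bar>phi (snd ab) (snd z)\<bar> \<partial>(lborel \<Otimes>\<^sub>M lborel))"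
      by (simp add: G_def abs_mult)
    also have "\<dots> = \<bar>fst z\<bar> * \<bar>snd z\<bar>"
      using prod_integrable(2)[of "\<lambda>a. \<bar>phi a (fst z)\<bar>" "\<lambda>a. \<bar>phi a (snd z)\<bar>"] phi_integrable
      by (simp add: phi_abs_integral)
    finally show ?thesis .
  qed
  have xy: "integrable P (\<lambda>z. fst z * snd z)"
    by (rule sq_prod_integrable[OF i1 i2]) auto
  have Gi: "integrable (P \<Otimes>\<^sub>M (lborel \<Otimes>\<^sub>M lborel)) (\<lambda>p. G (fst p) (snd p))"
  proof (rule Q.Fubini_integrable)
    show "integrable P (\<lambda>x. \<integral>y. norm (G (fst (x, y)) (snd (x, y))) \<partial>(lborel \<Otimes>\<^sub>M lborel))"
      using integrable_abs[OF xy] by (simp add: inner_abs abs_mult)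
  qed (use inner in auto)
  have Gi': "integrable (P \<Otimes>\<^sub>M (lborel \<Otimes>\<^sub>M lborel)) (case_prod G)"
    using Gi by (simp add: case_prod_beta')
  show "integrable (lborel \<Otimes>\<^sub>M lborel) (\<lambda>ab. \<integral>z. phi (fst ab) (fst z) * phi (snd ab) (snd z) \<partial>P)"
    using Q.integrable_snd[OF Gi'] by (simp add: G_def)
  have "(\<integral>z. fst z * snd z \<partial>P) = (\<integral>z. (\<integral>ab. G z ab \<partial>(lborel \<Otimes>\<^sub>M lborel)) \<partial>P)"
    using inner by simp
  also have "\<dots> = (\<integral>ab. (\<integral>z. G z ab \<partial>P) \<partial>(lborel \<Otimes>\<^sub>M lborel))"
    using Q.Fubini_integral[OF Gi'] by simp
  finally show "(\<integral>z. fst z * snd z \<partial>P) = (\<integral>ab. (\<integral>z. phi (fst ab) (fst z) * phi (snd ab) (snd z) \<partial>P) \<partial>(lborel \<Otimes>\<^sub>M lborel))"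
    by (simp add: G_def)
qed



abbreviation UL :: "real measure" where "UL \<equiv> restrict_space lborel {0<..<1::real}"

lemma fst_borel[measurable]: "fst \<in> borel_measurable (borel :: (real \<times> real) measure)"
proof -
  have "fst \<in> borel_measurable (borel \<Otimes>\<^sub>M borel :: (real \<times> real) measure)" by measurable
  then show ?thesis by (simp add: measurable_cong_sets[OF sets_borel_pair refl])
qed

lemma snd_borel[measurable]: "snd \<in> borel_measurable (borel :: (real \<times> real) measure)"
proof -
  have "snd \<in> borel_measurable (borel \<Otimes>\<^sub>M borel :: (real \<times> real) measure)" by measurable
  then show ?thesis by (simp add: measurable_cong_sets[OF sets_borel_pair refl])
qed

lemma UL_prob: "prob_space UL"
  by (auto simp add: emeasure_restrict_space space_restrict_space intro!: prob_spaceI)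

lemma space_UL: "space UL = {0<..<1}"
  by (simp add: space_restrict_space)

lemma sets_UL: "sets UL = sets (restrict_space borel {0<..<1::real})"
  by (rule sets_restrict_space_cong) simp

lemma quantile_eq_I: "quantile \<mu> = (\<lambda>t. Inf {x. t \<le> cdf \<mu> x})"
  by (simp add: quantile_def fun_eq_iff)

lemma quantile_pseudo:
  assumes "real_distribution \<mu>" "0 < t" "t < 1"
  shows "t \<le> cdf \<mu> x \<longleftrightarrow> quantile \<mu> t \<le> x"
proof -
  interpret cdf_distribution \<mu> using assms(1) by (simp add: cdf_distribution_def)
  show ?thesis unfolding quantile_eq_I by (rule pseudoinverse[OF assms(2,3)])
qed

lemma quantile_distr:
  assumes "real_distribution \<mu>"
  shows "distr UL borel (quantile \<mu>) = \<mu>"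
proof -
  interpret cdf_distribution \<mu> using assms(1) by (simp add: cdf_distribution_def)
  show ?thesis unfolding quantile_eq_I by (rule distr_I_eq_M)
qed

lemma quantile_meas_UL:
  assumes "real_distribution \<mu>"
  shows "quantile \<mu> \<in> borel_measurable UL"
proof -
  interpret cdf_distribution \<mu> using assms(1) by (simp add: cdf_distribution_def)
  have "quantile \<mu> \<in> borel_measurable (restrict_space borel {0<..<1})"
    unfolding quantile_eq_I by (rule measurable_CI)
  then show ?thesis unfolding measurable_cong_sets[OF sets_UL refl] .
qed

lemma quantile_meas:
  assumes "real_distribution \<mu>"
  shows "quantile \<mu> \<in> borel_measurable borel"
proof -
  interpret cdf_distribution \<mu> using assms(1) by (simp add: cdf_distribution_def)
  have eq: "quantile \<mu> = (\<lambda>t. if t \<in> {0<..<1} then quantile \<mu> t else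
     (if t \<le> 0 then quantile \<mu> 0 else if t = 1 then quantile \<mu> 1 else quantile \<mu> 2))"
  proof (rule ext)
    fix t :: real
    have A: "{x. t \<le> cdf \<mu> x} = {x. 0 \<le> cdf \<mu> x}" if "t \<le> 0"
      using that cdf_nonneg by (auto intro: order_trans)
    have B: "{x. t \<le> cdf \<mu> x} = {x. 2 \<le> cdf \<mu> x}" if "t > 1"
    proof -
      have "\<not> t \<le> cdf \<mu> x" "\<not> 2 \<le> cdf \<mu> x" for x using that cdf_bounded_prob[of x] by linarith+
      then show ?thesis by auto
    qed
    show "quantile \<mu> t = (if t \<in> {0<..<1} then quantile \<mu> t else
     (if t \<le> 0 then quantile \<mu> 0 else if t = 1 then quantile \<mu> 1 else quantile \<mu> 2))"
      using A B by (auto simp: quantile_def not_less)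
  qed
  have m1: "quantile \<mu> \<in> borel_measurable (restrict_space borel {0<..<1})"
    unfolding quantile_eq_I by (rule measurable_CI)
  have m2: "(\<lambda>t::real. if t \<le> 0 then quantile \<mu> 0 else if t = 1 then quantile \<mu> 1 else quantile \<mu> 2)
     \<in> borel_measurable borel" by measurable
  have m3: "(\<lambda>t::real. if t \<le> 0 then quantile \<mu> 0 else if t = 1 then quantile \<mu> 1 else quantile \<mu> 2)
     \<in> borel_measurable (restrict_space borel {x. x \<notin> {0<..<1}})"
    by (rule measurable_restrict_space1[OF m2])
  have m4: "(\<lambda>t. if t \<in> {0<..<1} then quantile \<mu> t else
     (if t \<le> 0 then quantile \<mu> 0 else if t = 1 then quantile \<mu> 1 else quantile \<mu> 2)) \<in> borel_measurable borel"
  proof (rule measurable_If_restrict_space_iff[THEN iffD2])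
    show "{x \<in> space borel. x \<in> {0<..<1::real}} \<in> sets borel" by simp
    show "quantile \<mu> \<in> borel_measurable (restrict_space borel {x. x \<in> {0<..<1}}) \<and>
      (\<lambda>t::real. if t \<le> 0 then quantile \<mu> 0 else if t = 1 then quantile \<mu> 1 else quantile \<mu> 2)
     \<in> borel_measurable (restrict_space borel {x. x \<notin> {0<..<1}})"
      unfolding Collect_mem_eq using m1 m3 by (intro conjI)
  qed
  show ?thesis using m4 eq[symmetric] by (rule back_subst)
qed

lemma cdf_quantile:
  assumes "real_distribution \<mu>" "\<forall>x. measure \<mu> {x} = 0" "0 < t" "t < 1"
  shows "cdf \<mu> (quantile \<mu> t) = t"
proof -
  interpret cdf_distribution \<mu> using assms(1) by (simp add: cdf_distribution_def)
  have ge: "t \<le> cdf \<mu> (quantile \<mu> t)"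
    using quantile_pseudo[OF assms(1,3,4)] by simp
  have lt: "cdf \<mu> x < t" if "x < quantile \<mu> t" for x
    using quantile_pseudo[OF assms(1,3,4), of x] that by auto
  have cont: "isCont (cdf \<mu>) (quantile \<mu> t)"
    using isCont_cdf assms(2) by simp
  have "(cdf \<mu> \<longlongrightarrow> cdf \<mu> (quantile \<mu> t)) (at_left (quantile \<mu> t))"
    using cont by (simp add: isCont_def filterlim_at_split)
  moreover have "eventually (\<lambda>x. cdf \<mu> x \<le> t) (at_left (quantile \<mu> t))"
    by (rule eventually_at_leftI[of "quantile \<mu> t - 1"]) (use lt in \<open>auto intro: less_imp_le\<close>)
  ultimately have "cdf \<mu> (quantile \<mu> t) \<le> t"
    by (rule tendsto_upperbound) simp
  with ge show ?thesis by simp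
qed



lemma phi_P_formula:
  fixes P :: "(real \<times> real) measure"
  assumes P: "prob_space P" and sP: "sets P = sets borel"
  shows "(\<integral>z. phi a (fst z) * phi b (snd z) \<partial>P) =
    measure P {z\<in>space P. a < fst z \<and> b < snd z}
    - (if b < 0 then 1 else 0) * measure (distr P borel fst) {a<..}
    - (if a < 0 then 1 else 0) * measure (distr P borel snd) {b<..}
    + (if a < 0 \<and> b < 0 then 1 else 0)"
proof -
  interpret prob_space P by fact
  have [measurable_cong]: "sets P = sets (borel \<Otimes>\<^sub>M borel)" using sP by (simp only: sets_borel_pair)
  define A where "A = {z\<in>space P. a < fst z \<and> b < snd z}"
  define B where "B = {z\<in>space P. a < fst z}"
  define C where "C = {z\<in>space P. b < snd z}"
  have [measurable]: "A \<in> sets P" "B \<in> sets P" "C \<in> sets P"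
    unfolding A_def B_def C_def by measurable
  have sp: "space P = UNIV" using sets_eq_imp_space_eq[OF sP] by simp
  have eq: "(\<lambda>z. phi a (fst z) * phi b (snd z)) = (\<lambda>z. indicator A z
    - (if b < 0 then 1 else 0) * indicator B z - (if a < 0 then 1 else 0) * indicator C z
    + (if a < 0 \<and> b < 0 then 1 else 0))"
    by (auto simp: fun_eq_iff phi_def A_def B_def C_def sp indicator_def)
  have fin: "emeasure P X < \<infinity>" for X by (simp add: less_top[symmetric])
  have iA: "integrable P (indicator A :: _ \<Rightarrow> real)" "integrable P (indicator B :: _ \<Rightarrow> real)"
     "integrable P (indicator C :: _ \<Rightarrow> real)"
    by (auto intro!: integrable_real_indicator fin)
  have "(\<integral>z. phi a (fst z) * phi b (snd z) \<partial>P) = measure P A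
    - (if b < 0 then 1 else 0) * measure P B - (if a < 0 then 1 else 0) * measure P C
    + (if a < 0 \<and> b < 0 then 1 else 0)"
    unfolding eq using iA
    by (simp add: Bochner_Integration.integral_add Bochner_Integration.integral_diff prob_space
        Int_absorb2 sets.sets_into_space)
  moreover have "measure (distr P borel fst) {a<..} = measure P B"
    by (subst measure_distr) (auto simp: B_def sp vimage_def)
  moreover have "measure (distr P borel snd) {b<..} = measure P C"
    by (subst measure_distr) (auto simp: C_def sp vimage_def)
  ultimately show ?thesis by (simp add: A_def)
qed

lemma pair_UL:
  assumes [measurable]: "g \<in> borel_measurable UL" "h \<in> borel_measurable UL"
  shows "(\<lambda>t. (g t, h t)) \<in> UL \<rightarrow>\<^sub>M (borel :: (real \<times> real) measure)"
    and "distr (distr UL borel (\<lambda>t. (g t, h t))) borel fst = distr UL borel g"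
    and "distr (distr UL borel (\<lambda>t. (g t, h t))) borel snd = distr UL borel h"
    and "prob_space (distr UL borel (\<lambda>t. (g t, h t)))"
    and "sets (distr UL borel (\<lambda>t. (g t, h t))) = sets borel"
proof -
  show m: "(\<lambda>t. (g t, h t)) \<in> UL \<rightarrow>\<^sub>M (borel :: (real \<times> real) measure)"
    by measurable
  show "distr (distr UL borel (\<lambda>t. (g t, h t))) borel fst = distr UL borel g"
    by (subst distr_distr) (use m in \<open>auto simp: comp_def\<close>)
  show "distr (distr UL borel (\<lambda>t. (g t, h t))) borel snd = distr UL borel h"
    by (subst distr_distr) (use m in \<open>auto simp: comp_def\<close>)
  show "prob_space (distr UL borel (\<lambda>t. (g t, h t)))"
    by (rule prob_space.prob_space_distr[OF UL_prob m])
qed simp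

lemma measure_Ioi_cdf:
  assumes "real_distribution \<mu>"
  shows "measure \<mu> {a<..} = 1 - cdf \<mu> a"
proof -
  interpret real_distribution \<mu> by fact
  have e: "{a<..} = space \<mu> - {..a}" by auto
  have "measure \<mu> (space \<mu> - {..a}) = 1 - measure \<mu> {..a}" by (rule prob_compl) auto
  then show ?thesis unfolding e by (simp add: cdf_def2)
qed

lemma comono_le:
  assumes mu: "real_distribution \<mu>" and nu: "real_distribution \<nu>" and pi: "\<pi> \<in> couplings \<mu> \<nu>"
  shows "(\<integral>z. phi a (fst z) * phi b (snd z) \<partial>\<pi>) \<le>
     (\<integral>z. phi a (fst z) * phi b (snd z) \<partial>distr UL borel (\<lambda>t. (quantile \<mu> t, quantile \<nu> t)))"
proof -
  define \<pi>0 where "\<pi>0 = distr UL borel (\<lambda>t. (quantile \<mu> t, quantile \<nu> t))"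
  note qm = quantile_meas_UL[OF mu] quantile_meas_UL[OF nu]
  note pu = pair_UL[OF qm]
  have p0: "prob_space \<pi>0" "sets \<pi>0 = sets borel" "distr \<pi>0 borel fst = \<mu>" "distr \<pi>0 borel snd = \<nu>"
    using pu quantile_distr[OF mu] quantile_distr[OF nu] by (simp_all add: \<pi>0_def)
  have p1: "prob_space \<pi>" "sets \<pi> = sets borel" "distr \<pi> borel fst = \<mu>" "distr \<pi> borel snd = \<nu>"
    using pi by (auto simp: couplings_def)
  interpret p1: prob_space \<pi> by fact
  have [measurable_cong]: "sets \<pi> = sets (borel \<Otimes>\<^sub>M borel)" using p1(2) by (simp only: sets_borel_pair)
  have sp1: "space \<pi> = UNIV" using sets_eq_imp_space_eq[OF p1(2)] by simp
  have L1: "measure \<pi> {z\<in>space \<pi>. a < fst z \<and> b < snd z} \<le> measure \<mu> {a<..}"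
  proof -
    have "measure \<pi> {z\<in>space \<pi>. a < fst z \<and> b < snd z} \<le> measure \<pi> {z\<in>space \<pi>. a < fst z}"
      by (rule p1.finite_measure_mono) (auto, measurable)
    also have "\<dots> = measure (distr \<pi> borel fst) {a<..}"
      by (subst measure_distr) (auto simp: sp1 vimage_def)
    finally show ?thesis using p1(3) by simp
  qed
  have L2: "measure \<pi> {z\<in>space \<pi>. a < fst z \<and> b < snd z} \<le> measure \<nu> {b<..}"
  proof -
    have "measure \<pi> {z\<in>space \<pi>. a < fst z \<and> b < snd z} \<le> measure \<pi> {z\<in>space \<pi>. b < snd z}"
      by (rule p1.finite_measure_mono) (auto, measurable)
    also have "\<dots> = measure (distr \<pi> borel snd) {b<..}"
      by (subst measure_distr) (auto simp: sp1 vimage_def)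
    finally show ?thesis using p1(4) by simp
  qed
  interpret mu: real_distribution \<mu> by fact
  interpret nu: real_distribution \<nu> by fact
  define c where "c = max (cdf \<mu> a) (cdf \<nu> b)"
  have c01: "0 \<le> c" "c \<le> 1" using mu.cdf_nonneg[of a] nu.cdf_nonneg[of b] nu.cdf_bounded_prob[of b] mu.cdf_bounded_prob[of a]
    by (auto simp: c_def max_def)
  have sp0: "space \<pi>0 = UNIV" using sets_eq_imp_space_eq[OF p0(2)] by simp
  have R: "measure \<pi>0 {z\<in>space \<pi>0. a < fst z \<and> b < snd z} = 1 - c"
  proof -
    have "measure \<pi>0 {z\<in>space \<pi>0. a < fst z \<and> b < snd z} =
        measure UL ((\<lambda>t. (quantile \<mu> t, quantile \<nu> t)) -` {z. a < fst z \<and> b < snd z} \<inter> space UL)"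
      unfolding \<pi>0_def sp0 using pu(1) by (subst measure_distr) auto
    also have "(\<lambda>t. (quantile \<mu> t, quantile \<nu> t)) -` {z. a < fst z \<and> b < snd z} \<inter> space UL = {c<..<1}"
    proof -
      have key: "t \<in> {0<..<1} \<Longrightarrow> (a < quantile \<mu> t \<and> b < quantile \<nu> t) \<longleftrightarrow> c < t" for t
        using quantile_pseudo[OF mu, of t a] quantile_pseudo[OF nu, of t b]
        by (auto simp: c_def not_le[symmetric])
      show ?thesis
      proof (rule set_eqI)
        fix t
        show "t \<in> (\<lambda>t. (quantile \<mu> t, quantile \<nu> t)) -` {z. a < fst z \<and> b < snd z} \<inter> space UL \<longleftrightarrow> t \<in> {c<..<1}"
        proof (cases "t \<in> {0<..<1}")
          case True then show ?thesis using key[OF True] by (auto simp: space_UL)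
        next
          case False then show ?thesis using c01 by (auto simp: space_UL)
        qed
      qed
    qed
    also have "measure UL {c<..<1} = measure lborel {c<..<1}"
      using c01 by (subst measure_restrict_space) auto
    also have "\<dots> = 1 - c" using c01 by simp
    finally show ?thesis .
  qed
  have "measure \<pi> {z\<in>space \<pi>. a < fst z \<and> b < snd z} \<le> measure \<pi>0 {z\<in>space \<pi>0. a < fst z \<and> b < snd z}"
    using L1 L2 R measure_Ioi_cdf[OF mu] measure_Ioi_cdf[OF nu] by (auto simp: c_def max_def)
  then show ?thesis
    unfolding \<pi>0_def[symmetric]
    unfolding phi_P_formula[OF p1(1,2)] phi_P_formula[OF p0(1,2)] p0(3,4) p1(3,4)
    by simp
qed



lemma sq_diff_integrable:
  fixes f g :: "'a \<Rightarrow> real"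
  assumes "integrable M (\<lambda>x. (f x)^2)" "integrable M (\<lambda>x. (g x)^2)"
    "f \<in> borel_measurable M" "g \<in> borel_measurable M"
  shows "integrable M (\<lambda>x. (f x - g x)^2)"
    and "(\<integral>x. (f x - g x)^2 \<partial>M) = (\<integral>x. (f x)^2 \<partial>M) - 2 * (\<integral>x. f x * g x \<partial>M) + (\<integral>x. (g x)^2 \<partial>M)"
proof -
  have fg: "integrable M (\<lambda>x. f x * g x)" by (rule sq_prod_integrable[OF assms])
  have eq: "(\<lambda>x. (f x - g x)^2) = (\<lambda>x. (f x)^2 - 2 * (f x * g x) + (g x)^2)"
    by (auto simp: fun_eq_iff power2_diff)
  show "integrable M (\<lambda>x. (f x - g x)^2)" unfolding eq using assms fg by auto
  show "(\<integral>x. (f x - g x)^2 \<partial>M) = (\<integral>x. (f x)^2 \<partial>M) - 2 * (\<integral>x. f x * g x \<partial>M) + (\<integral>x. (g x)^2 \<partial>M)"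
    unfolding eq using assms fg
    by (simp add: Bochner_Integration.integral_add Bochner_Integration.integral_diff)
qed

lemma coupling_UL:
  assumes [measurable]: "g \<in> borel_measurable UL" "h \<in> borel_measurable UL"
  shows "distr UL borel (\<lambda>t. (g t, h t)) \<in> couplings (distr UL borel g) (distr UL borel h)"
  using pair_UL[OF assms] by (simp add: couplings_def)

lemma INF_upper:
  assumes [measurable]: "g \<in> borel_measurable UL" "h \<in> borel_measurable UL"
    and ig: "integrable UL (\<lambda>t. (g t)^2)" and ih: "integrable UL (\<lambda>t. (h t)^2)"
  shows "(INF \<pi>\<in>couplings (distr UL borel g) (distr UL borel h). \<integral>\<^sup>+ z. ennreal ((fst z - snd z) ^ 2) \<partial>\<pi>)
     \<le> ennreal (\<integral>t. (g t - h t)^2 \<partial>UL)"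
proof -
  have "(INF \<pi>\<in>couplings (distr UL borel g) (distr UL borel h). \<integral>\<^sup>+ z. ennreal ((fst z - snd z) ^ 2) \<partial>\<pi>)
     \<le> \<integral>\<^sup>+ z. ennreal ((fst z - snd z) ^ 2) \<partial>(distr UL borel (\<lambda>t. (g t, h t)))"
    by (rule INF_lower[OF coupling_UL[OF assms(1,2)]])
  also have "\<dots> = \<integral>\<^sup>+ t. ennreal ((g t - h t) ^ 2) \<partial>UL"
    using pair_UL(1)[OF assms(1,2)] by (subst nn_integral_distr) auto
  also have "\<dots> = ennreal (\<integral>t. (g t - h t)^2 \<partial>UL)"
    by (rule nn_integral_eq_integral[OF sq_diff_integrable(1)[OF ig ih assms(1,2)]]) auto
  finally show ?thesis .
qed

lemma W2sq_upper:
  assumes [measurable]: "g \<in> borel_measurable UL" "h \<in> borel_measurable UL"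
    and ig: "integrable UL (\<lambda>t. (g t)^2)" and ih: "integrable UL (\<lambda>t. (h t)^2)"
  shows "W2sq (distr UL borel g) (distr UL borel h) \<le> (\<integral>t. (g t - h t)^2 \<partial>UL)"
proof -
  have "W2sq (distr UL borel g) (distr UL borel h) \<le> enn2real (ennreal (\<integral>t. (g t - h t)^2 \<partial>UL))"
    unfolding W2sq_def by (rule enn2real_mono[OF INF_upper[OF assms]]) simp
  also have "\<dots> = (\<integral>t. (g t - h t)^2 \<partial>UL)" by (simp add: integral_nonneg_AE)
  finally show ?thesis .
qed

lemma quantile_sq_int:
  assumes mu: "real_distribution \<mu>" and i: "integrable \<mu> (\<lambda>x. x^2)"
  shows "integrable UL (\<lambda>t. (quantile \<mu> t)^2)"
  using i quantile_meas_UL[OF mu] 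
  by (subst (asm) quantile_distr[OF mu, symmetric]) (simp add: integrable_distr_eq)

lemma W_lower:
  assumes mu: "real_distribution \<mu>" and nu: "real_distribution \<nu>"
    and imu: "integrable \<mu> (\<lambda>x. x^2)" and inu: "integrable \<nu> (\<lambda>x. x^2)"
    and pi: "\<pi> \<in> couplings \<mu> \<nu>"
  shows "ennreal (\<integral>t. (quantile \<mu> t - quantile \<nu> t)^2 \<partial>UL) \<le> \<integral>\<^sup>+ z. ennreal ((fst z - snd z) ^ 2) \<partial>\<pi>"
proof -
  define \<pi>0 where "\<pi>0 = distr UL borel (\<lambda>t. (quantile \<mu> t, quantile \<nu> t))"
  note qm[measurable] = quantile_meas_UL[OF mu] quantile_meas_UL[OF nu]
  note pu = pair_UL[OF qm]
  have p0: "prob_space \<pi>0" "sets \<pi>0 = sets borel" "distr \<pi>0 borel fst = \<mu>" "distr \<pi>0 borel snd = \<nu>"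
    using pu quantile_distr[OF mu] quantile_distr[OF nu] by (simp_all add: \<pi>0_def)
  have p1: "prob_space \<pi>" "sets \<pi> = sets borel" "distr \<pi> borel fst = \<mu>" "distr \<pi> borel snd = \<nu>"
    using pi by (auto simp: couplings_def)
  have [measurable_cong]: "sets \<pi> = sets (borel \<Otimes>\<^sub>M borel)" using p1(2) by (simp only: sets_borel_pair)
  have [measurable_cong]: "sets \<pi>0 = sets (borel \<Otimes>\<^sub>M borel)" using p0(2) by (simp only: sets_borel_pair)
  have fm1[measurable]: "fst \<in> borel_measurable \<pi>" "snd \<in> borel_measurable \<pi>" by measurable
  have fm0[measurable]: "fst \<in> borel_measurable \<pi>0" "snd \<in> borel_measurable \<pi>0" by measurable
  have i1: "integrable \<pi> (\<lambda>z. (fst z)^2)" "integrable \<pi> (\<lambda>z. (snd z)^2)"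
    using imu inu p1(3,4) integrable_distr_eq[OF fm1(1), of "\<lambda>x. x^2"] integrable_distr_eq[OF fm1(2), of "\<lambda>x. x^2"]
    by auto
  have i0: "integrable \<pi>0 (\<lambda>z. (fst z)^2)" "integrable \<pi>0 (\<lambda>z. (snd z)^2)"
    using imu inu p0(3,4) integrable_distr_eq[OF fm0(1), of "\<lambda>x. x^2"] integrable_distr_eq[OF fm0(2), of "\<lambda>x. x^2"]
    by auto
  have e1: "(\<integral>z. (fst z)^2 \<partial>\<pi>) = (\<integral>x. x^2 \<partial>\<mu>)" "(\<integral>z. (snd z)^2 \<partial>\<pi>) = (\<integral>x. x^2 \<partial>\<nu>)"
    using integral_distr[OF fm1(1), of "\<lambda>x. x^2"] integral_distr[OF fm1(2), of "\<lambda>x. x^2"] p1(3,4) by auto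
  have e0: "(\<integral>z. (fst z)^2 \<partial>\<pi>0) = (\<integral>x. x^2 \<partial>\<mu>)" "(\<integral>z. (snd z)^2 \<partial>\<pi>0) = (\<integral>x. x^2 \<partial>\<nu>)"
    using integral_distr[OF fm0(1), of "\<lambda>x. x^2"] integral_distr[OF fm0(2), of "\<lambda>x. x^2"] p0(3,4) by auto
  have xy: "(\<integral>z. fst z * snd z \<partial>\<pi>) \<le> (\<integral>z. fst z * snd z \<partial>\<pi>0)"
    unfolding hoeff(2)[OF p1(1,2) i1] hoeff(2)[OF p0(1,2) i0]
    by (rule integral_mono[OF hoeff(1)[OF p1(1,2) i1] hoeff(1)[OF p0(1,2) i0]])
       (use comono_le[OF mu nu pi] in \<open>simp add: \<pi>0_def\<close>)
  have d1: "(\<integral>z. (fst z - snd z)^2 \<partial>\<pi>) = (\<integral>x. x^2 \<partial>\<mu>) - 2 * (\<integral>z. fst z * snd z \<partial>\<pi>) + (\<integral>x. x^2 \<partial>\<nu>)"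
    using sq_diff_integrable(2)[OF i1 fm1] e1 by simp
  have d0: "(\<integral>z. (fst z - snd z)^2 \<partial>\<pi>0) = (\<integral>x. x^2 \<partial>\<mu>) - 2 * (\<integral>z. fst z * snd z \<partial>\<pi>0) + (\<integral>x. x^2 \<partial>\<nu>)"
    using sq_diff_integrable(2)[OF i0 fm0] e0 by simp
  have q: "(\<integral>z. (fst z - snd z)^2 \<partial>\<pi>0) = (\<integral>t. (quantile \<mu> t - quantile \<nu> t)^2 \<partial>UL)"
    unfolding \<pi>0_def using pu(1) by (subst integral_distr) auto
  have "(\<integral>t. (quantile \<mu> t - quantile \<nu> t)^2 \<partial>UL) \<le> (\<integral>z. (fst z - snd z)^2 \<partial>\<pi>)"
    using d1 d0 q xy by linarith
  also have "ennreal (\<integral>z. (fst z - snd z)^2 \<partial>\<pi>) = \<integral>\<^sup>+ z. ennreal ((fst z - snd z) ^ 2) \<partial>\<pi>"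
    by (rule nn_integral_eq_integral[symmetric, OF sq_diff_integrable(1)[OF i1 fm1]]) auto
  finally show ?thesis by (simp add: ennreal_leI)
qed

lemma W2sq_eq:
  assumes mu: "real_distribution \<mu>" and nu: "real_distribution \<nu>"
    and imu: "integrable \<mu> (\<lambda>x. x^2)" and inu: "integrable \<nu> (\<lambda>x. x^2)"
  shows "W2sq \<mu> \<nu> = (\<integral>t. (quantile \<mu> t - quantile \<nu> t)^2 \<partial>UL)"
proof -
  note qm[measurable] = quantile_meas_UL[OF mu] quantile_meas_UL[OF nu]
  note qi = quantile_sq_int[OF mu imu] quantile_sq_int[OF nu inu]
  have up: "(INF \<pi>\<in>couplings \<mu> \<nu>. \<integral>\<^sup>+ z. ennreal ((fst z - snd z) ^ 2) \<partial>\<pi>)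
     \<le> ennreal (\<integral>t. (quantile \<mu> t - quantile \<nu> t)^2 \<partial>UL)"
    using INF_upper[OF qm qi] by (simp add: quantile_distr[OF mu] quantile_distr[OF nu])
  have lo: "ennreal (\<integral>t. (quantile \<mu> t - quantile \<nu> t)^2 \<partial>UL) \<le>
     (INF \<pi>\<in>couplings \<mu> \<nu>. \<integral>\<^sup>+ z. ennreal ((fst z - snd z) ^ 2) \<partial>\<pi>)"
    by (rule INF_greatest) (rule W_lower[OF mu nu imu inu])
  have "(INF \<pi>\<in>couplings \<mu> \<nu>. \<integral>\<^sup>+ z. ennreal ((fst z - snd z) ^ 2) \<partial>\<pi>) = ennreal (\<integral>t. (quantile \<mu> t - quantile \<nu> t)^2 \<partial>UL)"
    using up lo by (rule antisym)
  then show ?thesis unfolding W2sq_def by (simp add: integral_nonneg_AE)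
qed




lemma wsum_identity:
  fixes w q :: "nat \<Rightarrow> real"
  assumes "(\<Sum>i\<in>I. w i) = 1"
  shows "(\<Sum>i\<in>I. w i * (q i - r)^2) = (\<Sum>i\<in>I. w i * (q i - (\<Sum>j\<in>I. w j * q j))^2) + ((\<Sum>j\<in>I. w j * q j) - r)^2"
proof -
  define qb where "qb = (\<Sum>j\<in>I. w j * q j)"
  have e: "(\<Sum>i\<in>I. w i * (q i - c)^2) = (\<Sum>i\<in>I. w i * (q i)^2) - 2 * c * qb + c^2" for c
  proof -
    have "(\<Sum>i\<in>I. w i * (q i - c)^2) = (\<Sum>i\<in>I. w i * (q i)^2 - 2 * c * (w i * q i) + c^2 * w i)"
      by (rule sum.cong) (auto simp: power2_diff algebra_simps)
    also have "\<dots> = (\<Sum>i\<in>I. w i * (q i)^2) - 2 * c * qb + c^2 * (\<Sum>i\<in>I. w i)"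
      by (simp add: sum.distrib sum_subtractf sum_distrib_left qb_def)
    finally show ?thesis using assms by simp
  qed
  show ?thesis unfolding qb_def[symmetric] e by (simp add: power2_diff algebra_simps power2_eq_square)
qed

definition sqint :: "(real \<Rightarrow> real) \<Rightarrow> bool" where
  "sqint f \<longleftrightarrow> f \<in> borel_measurable UL \<and> integrable UL (\<lambda>t. (f t)^2)"

lemma sqint_add: "sqint f \<Longrightarrow> sqint g \<Longrightarrow> sqint (\<lambda>t. f t + g t)"
proof -
  assume f: "sqint f" and g: "sqint g"
  have fg: "integrable UL (\<lambda>t. f t * g t)"
    using f g unfolding sqint_def by (intro sq_prod_integrable) auto
  have e: "(\<lambda>t. (f t + g t)^2) = (\<lambda>t. (f t)^2 + 2 * (f t * g t) + (g t)^2)"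
    by (auto simp: fun_eq_iff power2_sum)
  show ?thesis using f g fg unfolding sqint_def e by auto
qed

lemma sqint_cmult: "sqint f \<Longrightarrow> sqint (\<lambda>t. c * f t)"
  unfolding sqint_def by (auto simp: power_mult_distrib)

lemma sqint_sum: "finite I \<Longrightarrow> (\<And>i. i \<in> I \<Longrightarrow> sqint (f i)) \<Longrightarrow> sqint (\<lambda>t. \<Sum>i\<in>I. c i * f i t)"
proof (induction I rule: finite_induct)
  case empty then show ?case by (simp add: sqint_def)
next
  case (insert x F)
  then show ?case by (simp add: sqint_add sqint_cmult)
qed

lemma sqint_diff_int: "sqint f \<Longrightarrow> sqint g \<Longrightarrow> integrable UL (\<lambda>t. (f t - g t)^2)"
  unfolding sqint_def by (intro sq_diff_integrable(1)) auto

lemma real_distributionI': "prob_space \<nu> \<Longrightarrow> sets \<nu> = sets borel \<Longrightarrow> real_distribution \<nu>"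
  by (simp add: real_distribution_def real_distribution_axioms_def)

lemma bary:
  fixes \<mu> :: "nat \<Rightarrow> real measure" and w :: "nat \<Rightarrow> real"
  assumes fin: "finite I"
    and rd: "\<And>s. s \<in> I \<Longrightarrow> real_distribution (\<mu> s)"
    and im: "\<And>s. s \<in> I \<Longrightarrow> integrable (\<mu> s) (\<lambda>x. x^2)"
    and w0: "\<And>s. s \<in> I \<Longrightarrow> w s \<ge> 0" and w1: "(\<Sum>s\<in>I. w s) = 1"
  shows "(INF \<nu>\<in>P2. \<Sum>s\<in>I. w s * W2sq (\<mu> s) \<nu>) =
    (\<Sum>s\<in>I. w s * (\<integral>t. (quantile (\<mu> s) t - (\<Sum>s'\<in>I. w s' * quantile (\<mu> s') t))^2 \<partial>UL))"
proof -
  define Q where "Q s = quantile (\<mu> s)" for s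
  define Qb where "Qb t = (\<Sum>s'\<in>I. w s' * Q s' t)" for t
  define V where "V = (\<Sum>s\<in>I. w s * (\<integral>t. (Q s t - Qb t)^2 \<partial>UL))"
  have sQ: "sqint (Q s)" if "s \<in> I" for s
    using quantile_meas_UL[OF rd[OF that]] quantile_sq_int[OF rd[OF that] im[OF that]]
    by (simp add: sqint_def Q_def)
  have sQb: "sqint Qb"
    unfolding Qb_def[abs_def] by (rule sqint_sum[OF fin sQ])
  have lower: "V \<le> (\<Sum>s\<in>I. w s * W2sq (\<mu> s) \<nu>)" if nu: "\<nu> \<in> P2" for \<nu>
  proof -
    have rn: "real_distribution \<nu>" and inu: "integrable \<nu> (\<lambda>x. x^2)"
      using nu by (auto simp: P2_def intro: real_distributionI')
    define Qn where "Qn = quantile \<nu>"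
    have sQn: "sqint Qn"
      using quantile_meas_UL[OF rn] quantile_sq_int[OF rn inu] by (simp add: sqint_def Qn_def)
    have "(\<Sum>s\<in>I. w s * W2sq (\<mu> s) \<nu>) = (\<Sum>s\<in>I. w s * (\<integral>t. (Q s t - Qn t)^2 \<partial>UL))"
      by (rule sum.cong) (auto simp: W2sq_eq[OF rd rn im inu] Q_def Qn_def)
    also have "\<dots> = (\<integral>t. (\<Sum>s\<in>I. w s * (Q s t - Qn t)^2) \<partial>UL)"
      by (subst Bochner_Integration.integral_sum) (auto intro!: sqint_diff_int sQ sQn)
    also have "\<dots> \<ge> (\<integral>t. (\<Sum>s\<in>I. w s * (Q s t - Qb t)^2) \<partial>UL)"
    proof (rule integral_mono)
      show "integrable UL (\<lambda>t. \<Sum>s\<in>I. w s * (Q s t - Qn t)^2)"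
        by (auto intro!: sqint_diff_int sQ sQn)
      show "integrable UL (\<lambda>t. \<Sum>s\<in>I. w s * (Q s t - Qb t)^2)"
        by (auto intro!: sqint_diff_int sQ sQb)
      fix t
      show "(\<Sum>s\<in>I. w s * (Q s t - Qb t)^2) \<le> (\<Sum>s\<in>I. w s * (Q s t - Qn t)^2)"
        using wsum_identity[OF w1, of "\<lambda>s. Q s t" "Qn t"] by (simp add: Qb_def)
    qed
    also have "(\<integral>t. (\<Sum>s\<in>I. w s * (Q s t - Qb t)^2) \<partial>UL) = V"
      unfolding V_def by (subst Bochner_Integration.integral_sum) (auto intro!: sqint_diff_int sQ sQb)
    finally show ?thesis .
  qed
  define nb where "nb = distr UL borel Qb"
  have Qbm: "Qb \<in> borel_measurable UL" and Qbi: "integrable UL (\<lambda>t. (Qb t)^2)"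
    using sQb by (auto simp: sqint_def)
  have nbP2: "nb \<in> P2"
    unfolding P2_def nb_def
    using prob_space.prob_space_distr[OF UL_prob Qbm] Qbi Qbm
    by (simp add: integrable_distr_eq)
  have upper: "(\<Sum>s\<in>I. w s * W2sq (\<mu> s) nb) \<le> V"
    unfolding V_def
  proof (rule sum_mono)
    fix s assume s: "s \<in> I"
    have "W2sq (\<mu> s) nb = W2sq (distr UL borel (Q s)) (distr UL borel Qb)"
      by (simp add: Q_def quantile_distr[OF rd[OF s]] nb_def)
    also have "\<dots> \<le> (\<integral>t. (Q s t - Qb t)^2 \<partial>UL)"
      using sQ[OF s] sQb unfolding sqint_def by (intro W2sq_upper) auto
    finally show "w s * W2sq (\<mu> s) nb \<le> w s * (\<integral>t. (Q s t - Qb t)^2 \<partial>UL)"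
      by (rule mult_left_mono) (rule w0[OF s])
  qed
  have bdd: "bdd_below ((\<lambda>\<nu>. \<Sum>s\<in>I. w s * W2sq (\<mu> s) \<nu>) ` P2)"
    by (rule bdd_belowI[of _ V]) (auto intro: lower)
  have "(INF \<nu>\<in>P2. \<Sum>s\<in>I. w s * W2sq (\<mu> s) \<nu>) = V"
  proof (rule antisym)
    show "(INF \<nu>\<in>P2. \<Sum>s\<in>I. w s * W2sq (\<mu> s) \<nu>) \<le> V"
      using cINF_lower[OF bdd nbP2] upper by linarith
    show "V \<le> (INF \<nu>\<in>P2. \<Sum>s\<in>I. w s * W2sq (\<mu> s) \<nu>)"
      using nbP2 by (intro cINF_greatest lower) auto
  qed
  then show ?thesis by (simp add: V_def Q_def Qb_def)
qed




lemma cdf_meas: "real_distribution \<mu> \<Longrightarrow> cdf \<mu> \<in> borel_measurable borel"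
proof -
  assume "real_distribution \<mu>"
  then interpret cdf_distribution \<mu> by (simp add: cdf_distribution_def)
  show ?thesis by (rule measurable_C)
qed

theorem lemma2:
  fixes M :: "'a measure" and X :: "'a \<Rightarrow> real ^ 'p" and S :: "'a \<Rightarrow> nat"
    and K :: nat and w :: "nat \<Rightarrow> real" and fstar :: "real ^ 'p \<Rightarrow> nat \<Rightarrow> real" and \<alpha> :: real
  assumes "prob_space M"
    and "X \<in> measurable M borel" and "S \<in> measurable M (count_space UNIV)"
    and "K \<ge> 1"
    and "\<forall>\<omega>\<in>space M. S \<omega> \<in> {1..K}"
    and "\<forall>s\<in>{1..K}. measure M {\<omega> \<in> space M. S \<omega> = s} > 0"
    and "\<forall>s. (\<lambda>x. fstar x s) \<in> borel_measurable borel"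
    and "\<forall>s\<in>{1..K}. w s \<ge> 0" and "(\<Sum>s\<in>{1..K}. w s) = 1"
    and "\<forall>s\<in>{1..K}. \<forall>x. measure (cond_law M X S fstar s) {x} = 0"
    and "\<forall>s\<in>{1..K}. integrable (cond_law M X S fstar s) (\<lambda>x. x ^ 2)"
    and "0 \<le> \<alpha>" and "\<alpha> \<le> 1"
  shows "risk M X S K w fstar (fstar_alpha M X S K w fstar \<alpha>)
           = (1 - sqrt \<alpha>) ^ 2 * risk M X S K w fstar (fstar_alpha M X S K w fstar 0)
       \<and> (1 - sqrt \<alpha>) ^ 2 * risk M X S K w fstar (fstar_alpha M X S K w fstar 0)
           = (1 - sqrt \<alpha>) ^ 2 * unfairness M X S K w fstar"
proof -
  note Pm = assms(1) and Xm[measurable] = assms(2) and Sm[measurable] = assms(3)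
  interpret M: prob_space M by (rule Pm)
  define A where "A s = {\<omega> \<in> space M. S \<omega> = s}" for s
  have A_sets: "A s \<in> sets M" for s
    unfolding A_def by measurable
  have cm_prob: "prob_space (cond_meas M S s)" if s: "s \<in> {1..K}" for s
    unfolding cond_meas_def
  proof (rule prob_space_uniform_measure)
    have "measure M (A s) > 0" using assms(6) s by (simp add: A_def)
    then show "emeasure M {\<omega> \<in> space M. S \<omega> = s} \<noteq> 0"
      by (simp add: A_def M.emeasure_eq_measure)
    show "emeasure M {\<omega> \<in> space M. S \<omega> = s} \<noteq> \<infinity>" by simp
  qed
  have sets_cm[simp]: "sets (cond_meas M S s) = sets M" for s by (simp add: cond_meas_def)
  have space_cm[simp]: "space (cond_meas M S s) = space M" for s by (simp add: cond_meas_def)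
  define Y where "Y \<omega> = fstar (X \<omega>) (S \<omega>)" for \<omega>
  have fsm[measurable]: "(\<lambda>\<omega>. fstar (X \<omega>) i) \<in> borel_measurable M" for i
    using assms(7) by (intro measurable_compose[OF Xm]) auto
  have Ym[measurable]: "Y \<in> borel_measurable M"
    unfolding Y_def by (rule measurable_compose_countable'[where I=UNIV]) auto
  have Ym': "Y \<in> borel_measurable (cond_meas M S s)" for s
    using Ym by (simp add: measurable_cong_sets[OF sets_cm refl])
  define \<mu> where "\<mu> s = cond_law M X S fstar s" for s
  have mu_eq: "\<mu> s = distr (cond_meas M S s) borel Y" for s
    by (simp add: \<mu>_def cond_law_def Y_def[abs_def])
  have rd: "real_distribution (\<mu> s)" if s: "s \<in> {1..K}" for s
    unfolding mu_eq by (rule real_distributionI'[OF prob_space.prob_space_distr[OF cm_prob[OF s] Ym']]) simp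
  have im: "integrable (\<mu> s) (\<lambda>x. x^2)" if s: "s \<in> {1..K}" for s
    using assms(11) s by (simp add: \<mu>_def)
  have na: "\<forall>x. measure (\<mu> s) {x} = 0" if s: "s \<in> {1..K}" for s
    using assms(10) s by (simp add: \<mu>_def)
  define Q where "Q s = quantile (\<mu> s)" for s
  define Qb where "Qb t = (\<Sum>s'\<in>{1..K}. w s' * Q s' t)" for t
  define G where "G s y = (\<Sum>s'\<in>{1..K}. w s' * Q s' (cdf (\<mu> s) y))" for s y
  have f0: "fstar_alpha M X S K w fstar 0 x s = G s (fstar x s)" for x s
    by (simp add: fstar_alpha_def G_def Q_def \<mu>_def)
  have Gm: "G s \<in> borel_measurable borel" if s: "s \<in> {1..K}" for s
    unfolding G_def
  proof (rule borel_measurable_sum)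
    fix s' assume s': "s' \<in> {1..K}"
    have "Q s' \<in> borel_measurable borel" using quantile_meas[OF rd[OF s']] by (simp add: Q_def)
    then have "(\<lambda>y. Q s' (cdf (\<mu> s) y)) \<in> borel_measurable borel"
      by (rule measurable_compose[OF cdf_meas[OF rd[OF s]]])
    then show "(\<lambda>y. w s' * Q s' (cdf (\<mu> s) y)) \<in> borel_measurable borel" by measurable
  qed
  have int_s: "(\<integral>\<omega>. (fstar_alpha M X S K w fstar 0 (X \<omega>) (S \<omega>) - fstar (X \<omega>) (S \<omega>))^2 \<partial>cond_meas M S s)
      = (\<integral>t. (Q s t - Qb t)^2 \<partial>UL)" if s: "s \<in> {1..K}" for s
  proof -
    have Sm': "S \<in> M \<rightarrow>\<^sub>M count_space {1..K}"
      using assms(5) by (subst measurable_count_space_eq2_countable) auto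
    have Fm: "(\<lambda>\<omega>. (fstar_alpha M X S K w fstar 0 (X \<omega>) (S \<omega>) - fstar (X \<omega>) (S \<omega>))^2) \<in> borel_measurable M"
      unfolding f0
    proof (rule measurable_compose_countable'[OF _ Sm', where f="\<lambda>i \<omega>. (G i (fstar (X \<omega>) i) - fstar (X \<omega>) i)^2"])
      fix i assume i: "i \<in> {1..K}"
      show "(\<lambda>\<omega>. (G i (fstar (X \<omega>) i) - fstar (X \<omega>) i)^2) \<in> borel_measurable M"
        using measurable_compose[OF fsm Gm[OF i]] by measurable
    qed auto
    define H where "H y = (G s y - y)^2" for y
    have Hm: "H \<in> borel_measurable borel" unfolding H_def using Gm[OF s] by measurable
    have "(\<integral>\<omega>. (fstar_alpha M X S K w fstar 0 (X \<omega>) (S \<omega>) - fstar (X \<omega>) (S \<omega>))^2 \<partial>cond_meas M S s)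
       = (\<integral>\<omega>. H (Y \<omega>) \<partial>cond_meas M S s)"
    proof (rule integral_cong_AE)
      show "(\<lambda>\<omega>. (fstar_alpha M X S K w fstar 0 (X \<omega>) (S \<omega>) - fstar (X \<omega>) (S \<omega>))^2) \<in> borel_measurable (cond_meas M S s)"
        using Fm by (simp add: measurable_cong_sets[OF sets_cm refl])
      show "(\<lambda>\<omega>. H (Y \<omega>)) \<in> borel_measurable (cond_meas M S s)"
        using measurable_compose[OF Ym' Hm] .
      show "AE \<omega> in cond_meas M S s. (fstar_alpha M X S K w fstar 0 (X \<omega>) (S \<omega>) - fstar (X \<omega>) (S \<omega>))^2 = H (Y \<omega>)"
        unfolding cond_meas_def
        by (rule AE_uniform_measureI) (auto simp: f0 H_def Y_def intro!: AE_I2)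
    qed
    also have "\<dots> = (\<integral>y. H y \<partial>\<mu> s)"
      unfolding mu_eq by (rule integral_distr[symmetric, OF Ym' Hm])
    also have "\<dots> = (\<integral>t. H (Q s t) \<partial>UL)"
      unfolding Q_def
      by (subst (1) quantile_distr[OF rd[OF s], symmetric])
         (rule integral_distr[OF quantile_meas_UL[OF rd[OF s]] Hm])
    also have "\<dots> = (\<integral>t. (Q s t - Qb t)^2 \<partial>UL)"
    proof (rule Bochner_Integration.integral_cong[OF refl])
      fix t assume "t \<in> space UL"
      then have t: "0 < t" "t < 1" by (auto simp: space_UL)
      have "G s (Q s t) = Qb t"
        unfolding G_def Qb_def Q_def using cdf_quantile[OF rd[OF s] na[OF s] t] by simp
      then show "H (Q s t) = (Q s t - Qb t)^2" by (simp add: H_def power2_commute)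
    qed
    finally show ?thesis .
  qed
  have risk0: "risk M X S K w fstar (fstar_alpha M X S K w fstar 0) =
      (\<Sum>s\<in>{1..K}. w s * (\<integral>t. (quantile (\<mu> s) t - (\<Sum>s'\<in>{1..K}. w s' * quantile (\<mu> s') t))^2 \<partial>UL))"
    unfolding risk_def by (rule sum.cong[OF refl]) (simp add: int_s Q_def Qb_def)
  have unf: "unfairness M X S K w fstar =
      (\<Sum>s\<in>{1..K}. w s * (\<integral>t. (quantile (\<mu> s) t - (\<Sum>s'\<in>{1..K}. w s' * quantile (\<mu> s') t))^2 \<partial>UL))"
    unfolding unfairness_def \<mu>_def[symmetric]
    by (rule bary) (use rd im assms(8,9) in auto)
  have pw: "fstar_alpha M X S K w fstar \<alpha> x i - fstar x i = (1 - sqrt \<alpha>) * (fstar_alpha M X S K w fstar 0 x i - fstar x i)" for x i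
    by (simp add: fstar_alpha_def algebra_simps)
  have riska: "risk M X S K w fstar (fstar_alpha M X S K w fstar \<alpha>)
           = (1 - sqrt \<alpha>) ^ 2 * risk M X S K w fstar (fstar_alpha M X S K w fstar 0)"
    unfolding risk_def pw power_mult_distrib integral_mult_right_zero sum_distrib_left
    by (rule sum.cong[OF refl]) (simp add: algebra_simps)
  show ?thesis using riska risk0 unf by simp
qed


end
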